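(* Let $X$ be a prelength space and $Y$ a metric space. For any $f\in\mathfrak{C}(X\to Y)$ and $x\in\mathfrak{C}(X)$, the function $\mathrm{ap}(f)(x)=\lambda\varepsilon.\,\mathrm{map}(f(\tfrac{\varepsilon}{2}))(x)(\tfrac{\varepsilon}{2})$ is a regular function over $Y$.
   Context: $\mathbb{Q}^+$ denotes the strictly positive rationals; all $\varepsilon,\delta$ (with indices) range over $\mathbb{Q}^+$. A metric space is a triple $(X,\asymp,B)$ where $\asymp$ is an equivalence relation on $X$ and $B$ assigns to each $\varepsilon\in\mathbb{Q}^+$ a binary relation $B_\varepsilon$ on $X$ respecting $\asymp$, such that: (1) each $B_\varepsilon$ is reflexive; (2) each $B_\varepsilon$ is symmetric; (3) if $B_{\varepsilon_1}(a,b)$ and $B_{\varepsilon_2}(b,c)$ then $B_{\varepsilon_1+\varepsilon_2}(a,c)$; (4) if $B_{\varepsilon+\delta}(a,b)$ for all $\delta$, then $B_\varepsilon(a,b)$; (5) if $B_\varepsilon(a,b)$ for all $\varepsilon$, then $a\asymp b$. A prelength space is a metric space such that for all $a,b,\varepsilon,\delta_1,\delta_2$ with $\varepsilon<\delta_1+\delta_2$ and $B_\varepsilon(a,b)$ there exists $c$ with $B_{\delta_1}(a,c)$ and $B_{\delta_2}(c,b)$. A regular function over a metric space $W$ is a function $x:\mathbb{Q}^+\to W$ such that $B_{\varepsilon_1+\varepsilon_2}(x(\varepsilon_1),x(\varepsilon_2))$ for all $\varepsilon_1,\varepsilon_2$; $\mathfrak{C}(W)$ is the metric space of regular functions with $x\asymp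 y$ iff $B_{2\varepsilon}(x(\varepsilon),y(\varepsilon))$ for all $\varepsilon$ and $B'_\varepsilon(x,y)$ iff $B_{\varepsilon+\delta_1+\delta_2}(x(\delta_1),y(\delta_2))$ for all $\delta_1,\delta_2$. A uniformly continuous function $g:X\to Y$ is a pair of a function and a modulus $\mu_g$ with $B^X_{\mu_g(\varepsilon)}(x_1,x_2)\Rightarrow B^Y_\varepsilon(g(x_1),g(x_2))$. $X\to Y$ is the metric space of uniformly continuous functions with $B_\varepsilon(g,h)$ iff $B^Y_\varepsilon(g(a),h(a))$ for all $a$, and $g\asymp h$ iff $g(a)\asymp h(a)$ for all $a$. $\mathrm{map}(g)(x)=\lambda\varepsilon.\,g(x(\mu_g(\varepsilon)))$. *)

theory Defs
  imports Complex_Main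
begin

text \<open>Only positive rationals are meaningful indices.\<close>

definition metric_sp :: "'a set \<Rightarrow> ('a \<Rightarrow> 'a \<Rightarrow> bool) \<Rightarrow> (rat \<Rightarrow> 'a \<Rightarrow> 'a \<Rightarrow> bool) \<Rightarrow> bool" where
  "metric_sp S eq B \<longleftrightarrow>
     (\<forall>a\<in>S. eq a a) \<and>
     (\<forall>a\<in>S. \<forall>b\<in>S. eq a b \<longrightarrow> eq b a) \<and>
     (\<forall>a\<in>S. \<forall>b\<in>S. \<forall>c\<in>S. eq a b \<longrightarrow> eq b c \<longrightarrow> eq a c) \<and>
     (\<forall>e>0. \<forall>a\<in>S. \<forall>b\<in>S. \<forall>a'\<in>S. \<forall>b'\<in>S.
        eq a a' \<longrightarrow> eq b b' \<longrightarrow> B e a b \<longrightarrow> B e a' b') \<and>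
     (\<forall>e>0. \<forall>a\<in>S. B e a a) \<and>
     (\<forall>e>0. \<forall>a\<in>S. \<forall>b\<in>S. B e a b \<longrightarrow> B e b a) \<and>
     (\<forall>e1>0. \<forall>e2>0. \<forall>a\<in>S. \<forall>b\<in>S. \<forall>c\<in>S.
        B e1 a b \<longrightarrow> B e2 b c \<longrightarrow> B (e1 + e2) a c) \<and>
     (\<forall>e>0. \<forall>a\<in>S. \<forall>b\<in>S. (\<forall>d>0. B (e + d) a b) \<longrightarrow> B e a b) \<and>
     (\<forall>a\<in>S. \<forall>b\<in>S. (\<forall>e>0. B e a b) \<longrightarrow> eq a b)"

definition prelength_sp :: "'a set \<Rightarrow> ('a \<Rightarrow> 'a \<Rightarrow> bool) \<Rightarrow> (rat \<Rightarrow> 'a \<Rightarrow> 'a \<Rightarrow> bool) \<Rightarrow> bool" where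
  "prelength_sp S eq B \<longleftrightarrow> metric_sp S eq B \<and>
     (\<forall>a\<in>S. \<forall>b\<in>S. \<forall>e>0. \<forall>d1>0. \<forall>d2>0. e < d1 + d2 \<longrightarrow> B e a b \<longrightarrow>
        (\<exists>c\<in>S. B d1 a c \<and> B d2 c b))"

definition regular :: "'a set \<Rightarrow> (rat \<Rightarrow> 'a \<Rightarrow> 'a \<Rightarrow> bool) \<Rightarrow> (rat \<Rightarrow> 'a) \<Rightarrow> bool" where
  "regular S B x \<longleftrightarrow> (\<forall>e>0. x e \<in> S) \<and>
     (\<forall>e1>0. \<forall>e2>0. B (e1 + e2) (x e1) (x e2))"

definition uc_set :: "'a set \<Rightarrow> (rat \<Rightarrow> 'a \<Rightarrow> 'a \<Rightarrow> bool) \<Rightarrow> 'b set \<Rightarrow> (rat \<Rightarrow> 'b \<Rightarrow> 'b \<Rightarrow> bool)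
    \<Rightarrow> (('a \<Rightarrow> 'b) \<times> (rat \<Rightarrow> rat)) set" where
  "uc_set SX BX SY BY = {(g, mu).
      (\<forall>a\<in>SX. g a \<in> SY) \<and> (\<forall>e>0. mu e > 0) \<and>
      (\<forall>e>0. \<forall>a1\<in>SX. \<forall>a2\<in>SX. BX (mu e) a1 a2 \<longrightarrow> BY e (g a1) (g a2))}"

definition fun_eq :: "'a set \<Rightarrow> ('b \<Rightarrow> 'b \<Rightarrow> bool)
    \<Rightarrow> ('a \<Rightarrow> 'b) \<times> (rat \<Rightarrow> rat) \<Rightarrow> ('a \<Rightarrow> 'b) \<times> (rat \<Rightarrow> rat) \<Rightarrow> bool" where
  "fun_eq SX eqY g h \<longleftrightarrow> (\<forall>a\<in>SX. eqY (fst g a) (fst h a))"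

definition fun_ball :: "'a set \<Rightarrow> (rat \<Rightarrow> 'b \<Rightarrow> 'b \<Rightarrow> bool)
    \<Rightarrow> rat \<Rightarrow> ('a \<Rightarrow> 'b) \<times> (rat \<Rightarrow> rat) \<Rightarrow> ('a \<Rightarrow> 'b) \<times> (rat \<Rightarrow> rat) \<Rightarrow> bool" where
  "fun_ball SX BY e g h \<longleftrightarrow> (\<forall>a\<in>SX. BY e (fst g a) (fst h a))"

definition mapC :: "('a \<Rightarrow> 'b) \<times> (rat \<Rightarrow> rat) \<Rightarrow> (rat \<Rightarrow> 'a) \<Rightarrow> rat \<Rightarrow> 'b" where
  "mapC g x = (\<lambda>e. fst g (x (snd g e)))"

definition apC :: "(rat \<Rightarrow> ('a \<Rightarrow> 'b) \<times> (rat \<Rightarrow> rat)) \<Rightarrow> (rat \<Rightarrow> 'a) \<Rightarrow> rat \<Rightarrow> 'b" where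
  "apC f x = (\<lambda>e. mapC (f (e / 2)) x (e / 2))"

end

theory Submission
  imports Defs
begin

lemma key:
  assumes P: "prelength_sp SX eqX BX"
    and M: "metric_sp SY eqY BY"
    and g: "(g, mu) \<in> uc_set SX BX SY BY"
    and h: "(h, nu) \<in> uc_set SX BX SY BY"
    and gh: "\<forall>a\<in>SX. BY r (g a) (h a)" and r: "r > 0"
    and e1: "e1 > 0" and e2: "e2 > 0"
    and a: "a \<in> SX" and b: "b \<in> SX"
    and ab: "BX (mu e1 + nu e2) a b"
  shows "BY (e1 + r + e2) (g a) (h b)"
proof -
  have pre: "\<And>a b e d1 d2. a \<in> SX \<Longrightarrow> b \<in> SX \<Longrightarrow> e > 0 \<Longrightarrow> d1 > 0 \<Longrightarrow> d2 > 0
     \<Longrightarrow> e < d1 + d2 \<Longrightarrow> BX e a b \<Longrightarrow> \<exists>c\<in>SX. BX d1 a c \<and> BX d2 c b"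
    using P unfolding prelength_sp_def by blast
  have tri: "\<And>e1 e2 a b c. e1 > 0 \<Longrightarrow> e2 > 0 \<Longrightarrow> a \<in> SY \<Longrightarrow> b \<in> SY \<Longrightarrow> c \<in> SY \<Longrightarrow>
     BY e1 a b \<Longrightarrow> BY e2 b c \<Longrightarrow> BY (e1 + e2) a c"
    using M unfolding metric_sp_def by blast
  have cl: "\<And>e a b. e > 0 \<Longrightarrow> a \<in> SY \<Longrightarrow> b \<in> SY \<Longrightarrow> (\<forall>d>0. BY (e + d) a b) \<Longrightarrow> BY e a b"
    using M unfolding metric_sp_def by blast
  have gS: "\<forall>a\<in>SX. g a \<in> SY" "\<forall>e>0. mu e > 0"
    "\<forall>e>0. \<forall>a1\<in>SX. \<forall>a2\<in>SX. BX (mu e) a1 a2 \<longrightarrow> BY e (g a1) (g a2)"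
    using g unfolding uc_set_def by auto
  have hS: "\<forall>a\<in>SX. h a \<in> SY" "\<forall>e>0. nu e > 0"
    "\<forall>e>0. \<forall>a1\<in>SX. \<forall>a2\<in>SX. BX (nu e) a1 a2 \<longrightarrow> BY e (h a1) (h a2)"
    using h unfolding uc_set_def by auto
  have m1: "mu e1 > 0" using gS e1 by auto
  have m2: "nu e2 > 0" using hS e2 by auto
  show ?thesis
  proof (rule cl)
    show "e1 + r + e2 > 0" using e1 e2 r by simp
    show "g a \<in> SY" "h b \<in> SY" using gS hS a b by auto
    show "\<forall>d>0. BY (e1 + r + e2 + d) (g a) (h b)"
    proof (intro allI impI)
      fix d :: rat assume d: "d > 0"
      define eta where "eta = nu d"
      have eta: "eta > 0" using hS d eta_def by auto
      obtain c where c: "c \<in> SX" "BX (mu e1) a c" "BX (nu e2 + eta/2) c b"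
        using pre[OF a b _ m1 _ _ ab, of "nu e2 + eta/2"] m1 m2 eta by auto
      obtain c' where c': "c' \<in> SX" "BX eta c c'" "BX (nu e2) c' b"
        using pre[OF c(1) b _ eta m2 _ c(3)] m2 eta by auto
      have 1: "BY e1 (g a) (g c)" using gS(3) e1 a c by blast
      have 2: "BY r (g c) (h c)" using gh c by blast
      have 3: "BY d (h c) (h c')" using hS(3) d c c' eta_def by blast
      have 4: "BY e2 (h c') (h b)" using hS(3) e2 c' b by blast
      have 12: "BY (e1 + r) (g a) (h c)"
        using tri[OF e1 r _ _ _ 1 2] gS hS a c by auto
      have 123: "BY (e1 + r + d) (g a) (h c')"
        using tri[OF _ d _ _ _ 12 3] gS hS a c c' e1 r by auto
      have "BY (e1 + r + d + e2) (g a) (h b)"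
        using tri[OF _ e2 _ _ _ 123 4] gS hS a b c' e1 r d by auto
      then show "BY (e1 + r + e2 + d) (g a) (h b)" by (simp add: algebra_simps)
    qed
  qed
qed

theorem theorem25:
  fixes SX :: "'a set" and eqX :: "'a \<Rightarrow> 'a \<Rightarrow> bool" and BX :: "rat \<Rightarrow> 'a \<Rightarrow> 'a \<Rightarrow> bool"
    and SY :: "'b set" and eqY :: "'b \<Rightarrow> 'b \<Rightarrow> bool" and BY :: "rat \<Rightarrow> 'b \<Rightarrow> 'b \<Rightarrow> bool"
    and f :: "rat \<Rightarrow> ('a \<Rightarrow> 'b) \<times> (rat \<Rightarrow> rat)" and x :: "rat \<Rightarrow> 'a"
  assumes "prelength_sp SX eqX BX"
    and "metric_sp SY eqY BY"
    and "regular (uc_set SX BX SY BY) (fun_ball SX BY) f"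
    and "regular SX BX x"
  shows "regular SY BY (apC f x)"
proof -
  have fr: "\<And>e. e > 0 \<Longrightarrow> f e \<in> uc_set SX BX SY BY"
    and fb: "\<And>e1 e2. e1 > 0 \<Longrightarrow> e2 > 0 \<Longrightarrow> fun_ball SX BY (e1 + e2) (f e1) (f e2)"
    using assms(3) unfolding regular_def by auto
  have xr: "\<And>e. e > 0 \<Longrightarrow> x e \<in> SX"
    and xb: "\<And>e1 e2. e1 > 0 \<Longrightarrow> e2 > 0 \<Longrightarrow> BX (e1 + e2) (x e1) (x e2)"
    using assms(4) unfolding regular_def by auto
  have ucs: "\<And>e d. e > 0 \<Longrightarrow> d > 0 \<Longrightarrow> snd (f e) d > 0"
  proof -
    fix e d :: rat assume "e > 0" "d > 0"
    then show "snd (f e) d > 0" using fr[of e] unfolding uc_set_def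
      by (cases "f e") auto
  qed
  have ucS: "\<And>e a. e > 0 \<Longrightarrow> a \<in> SX \<Longrightarrow> fst (f e) a \<in> SY"
  proof -
    fix e :: rat and a assume "e > 0" "a \<in> SX"
    then show "fst (f e) a \<in> SY" using fr[of e] unfolding uc_set_def
      by (cases "f e") auto
  qed
  show ?thesis
    unfolding regular_def
  proof (intro conjI allI impI)
    fix e :: rat assume e: "e > 0"
    show "apC f x e \<in> SY"
      unfolding apC_def mapC_def using ucS[of "e/2"] xr ucs e by simp
  next
    fix e1 e2 :: rat assume e1: "e1 > 0" and e2: "e2 > 0"
    have h1: "f (e1/2) \<in> uc_set SX BX SY BY" using fr e1 by simp
    have h2: "f (e2/2) \<in> uc_set SX BX SY BY" using fr e2 by simp
    have gh: "\<forall>a\<in>SX. BY (e1/2 + e2/2) (fst (f (e1/2)) a) (fst (f (e2/2)) a)"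
      using fb[of "e1/2" "e2/2"] e1 e2 unfolding fun_ball_def by simp
    have p1: "snd (f (e1/2)) (e1/2) > 0" using ucs e1 by simp
    have p2: "snd (f (e2/2)) (e2/2) > 0" using ucs e2 by simp
    have "BY (e1/2 + (e1/2 + e2/2) + e2/2)
        (fst (f (e1/2)) (x (snd (f (e1/2)) (e1/2)))) (fst (f (e2/2)) (x (snd (f (e2/2)) (e2/2))))"
      apply (rule key[OF assms(1) assms(2), of "fst (f (e1/2))" "snd (f (e1/2))"
            "fst (f (e2/2))" "snd (f (e2/2))"])
      using h1 h2 gh e1 e2 xr p1 p2 xb[OF p1 p2] by auto
    moreover have "e1/2 + (e1/2 + e2/2) + e2/2 = e1 + e2" by (simp add: field_simps)
    ultimately show "BY (e1 + e2) (apC f x e1) (apC f x e2)"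
      unfolding apC_def mapC_def by metis
  qed
qed

end
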